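(* Let $(A,\mathcal N,\mathcal P,\lambda)$ be a game and $(\sigma,\phi)$ a uniform strategy on it. Then the set $\mathcal S_\phi(\sigma)$ of all bijections $\theta:x\cong y$ between configurations of $\sigma$ such that $\theta$ is the restriction to $x$ of $\phi_\alpha$ for some $\alpha\in\mathcal N$ (with $y=\phi_\alpha(x)$) is an isomorphism family on the event structure $\sigma$, and $p_\sigma$ is a map of event structures with symmetry $(\sigma,\mathcal S_\phi(\sigma))\to(A,\mathcal S)$, where $\mathcal S$ is the closure under composition of $\mathcal S_{\mathcal N}(A)\cup\mathcal S_{\mathcal P}(A)$.
   Context: Event structure: a set with a partial order $\leq$ with finitely many elements below each element, an irreflexive symmetric hereditary conflict $\#$ (if $a\leq a'$, $a\#b$ then $a'\#b$), and polarity into $\{-,+\}$. Configurations: finite down-closed conflict-free subsets, $\mathrm{Conf}(\cdot)$. $x\subseteq^+y$ (resp. $\subseteq^-$): $x\subseteq y$ with $y\setminus x$ all positive (resp. negative). Map of event structures: polarity-preserving function mapping configurations to configurations and injective on each configuration. Automorphism: bijection preserving and reflecting $\leq,\#$, polarity; it fixes $x$ if identity on $x$; negative if whenever it fixes $x$ and $x\subseteq^+y$ it fixes $y$; positive likewise with $\subseteq^-$. Group actions are homomorphisms into automorphism groups. A game $(A,\mathcal N,\mathcal P,\lambda)$: $\mathcal N$ a group acting on $A$ by negative automorphisms, $\mathcal P$ by positive automorphisms, $\lambda:\mathcal N\times\mathcal P\to\mathcal P\times\mathcal N$ with (i) $\lambda(e,\beta)=(\beta,e)$, $\lambda(\alpha,e)=(e,\alpha)$;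 (ii) if $\lambda(\alpha',\beta)=(\beta_1,\alpha_1)$, $\lambda(\alpha,\beta_1)=(\beta_2,\alpha_2)$ then $\lambda(\alpha\alpha',\beta)=(\beta_2,\alpha_2\alpha_1)$; (iii) if $\lambda(\alpha,\beta)=(\beta_1,\alpha_1)$, $\lambda(\alpha_1,\beta')=(\beta_2,\alpha_2)$ then $\lambda(\alpha,\beta\beta')=(\beta_1\beta_2,\alpha_2)$; (iv) if $\lambda(\alpha,\beta)=(\beta',\alpha')$ then $\alpha(\beta(a))=\beta'(\alpha'(a))$ for all $a$. For a group $G$ acting on $A$, $\mathcal S_G(A)$ is the set of bijections $x\cong g(x)$ ($x\in\mathrm{Conf}(A)$, $g\in G$) obtained by restricting $g$ to $x$. A strategy on $A$ is an event structure $\sigma$ with a map $p_\sigma:\sigma\to A$ such that for every $x\in\mathrm{Conf}(\sigma)$: if $p_\sigma(x)\subseteq^-z$ there is a unique $y\in\mathrm{Conf}(\sigma)$ with $x\subseteq y$, $p_\sigma(y)=z$; if $z\subseteq^+p_\sigma(x)$ there is $y\subseteq x$ in $\mathrm{Conf}(\sigma)$ with $p_\sigma(y)=z$. A weak map $\sigma\to\tau$ is a map $f$ with elements $f[x]\in\mathcal P$ ($x\in\mathrm{Conf}(\sigma)$) such that $f[x](p_\tau(f(s)))=p_\sigma(s)$ for $s\in x$. $\alpha\cdot\sigma$ is $\sigma$ with projection $\alpha\circ p_\sigma$. A uniform strategy is a strategy $\sigma$ with weak maps $\phi_\alpha:\alpha\cdot\sigma\to\sigma$ ($\alpha\in\mathcal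 N$) such that for all $x\in\mathrm{Conf}(\sigma)$: $\phi_e(x)=x$, $\phi_e[x]=e$; and for all $\alpha,\alpha'\in\mathcal N$, with $y=\phi_\alpha(x)$ and $(\gamma,\beta)=\lambda(\alpha',\phi_\alpha[x])$: $\phi_{\alpha'\alpha}(x)=\phi_\beta(y)$ and $\phi_{\alpha'\alpha}[x]=\gamma\,\phi_\beta[y]$. An isomorphism family on an event structure $E$ is a set $\mathcal S$ of polarity-preserving bijections between configurations, containing all identities, closed under composition and inverses, such that for $\theta:x\cong y$ in $\mathcal S$: restrictions of $\theta$ to subconfigurations $x'\subseteq x$ are in $\mathcal S$, and for every configuration $x'\supseteq x$ there is $\theta':x'\cong y'$ in $\mathcal S$ restricting to $\theta$ on $x$. A map of event structures with symmetry $(E,\mathcal S_E)\to(F,\mathcal S_F)$ is a map of event structures $f:E\to F$ such that for every $\theta:x\cong y$ in $\mathcal S_E$, the bijection $f(x)\cong f(y)$, $f(a)\mapsto f(\theta(a))$, is in $\mathcal S_F$. *)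

theory Defs
  imports "HOL-Algebra.Group"
begin

text \<open>Polarity: True = positive (+), False = negative (-).\<close>
record 'a evstr =
  es_ev  :: "'a set"
  es_le  :: "'a \<Rightarrow> 'a \<Rightarrow> bool"
  es_cf  :: "'a \<Rightarrow> 'a \<Rightarrow> bool"
  es_pol :: "'a \<Rightarrow> bool"

definition event_structure :: "'a evstr \<Rightarrow> bool" where
  "event_structure E \<longleftrightarrow>
     (\<forall>a\<in>es_ev E. es_le E a a) \<and>
     (\<forall>a\<in>es_ev E. \<forall>b\<in>es_ev E. es_le E a b \<and> es_le E b a \<longrightarrow> a = b) \<and>
     (\<forall>a\<in>es_ev E. \<forall>b\<in>es_ev E. \<forall>c\<in>es_ev E. es_le E a b \<and> es_le E b c \<longrightarrow> es_le E a c) \<and>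
     (\<forall>a\<in>es_ev E. finite {b\<in>es_ev E. es_le E b a}) \<and>
     (\<forall>a\<in>es_ev E. \<not> es_cf E a a) \<and>
     (\<forall>a\<in>es_ev E. \<forall>b\<in>es_ev E. es_cf E a b \<longrightarrow> es_cf E b a) \<and>
     (\<forall>a\<in>es_ev E. \<forall>a'\<in>es_ev E. \<forall>b\<in>es_ev E. es_le E a a' \<and> es_cf E a b \<longrightarrow> es_cf E a' b)"

definition Conf :: "'a evstr \<Rightarrow> 'a set set" where
  "Conf E = {x. finite x \<and> x \<subseteq> es_ev E \<and>
              (\<forall>a\<in>x. \<forall>b\<in>es_ev E. es_le E b a \<longrightarrow> b \<in> x) \<and>
              (\<forall>a\<in>x. \<forall>b\<in>x. \<not> es_cf E a b)}"

definition pos_sub :: "'a evstr \<Rightarrow> 'a set \<Rightarrow> 'a set \<Rightarrow> bool" where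
  "pos_sub E x y \<longleftrightarrow> x \<subseteq> y \<and> (\<forall>a\<in>y - x. es_pol E a)"

definition neg_sub :: "'a evstr \<Rightarrow> 'a set \<Rightarrow> 'a set \<Rightarrow> bool" where
  "neg_sub E x y \<longleftrightarrow> x \<subseteq> y \<and> (\<forall>a\<in>y - x. \<not> es_pol E a)"

definition es_map :: "'a evstr \<Rightarrow> 'b evstr \<Rightarrow> ('a \<Rightarrow> 'b) \<Rightarrow> bool" where
  "es_map E F f \<longleftrightarrow>
     (\<forall>a\<in>es_ev E. es_pol F (f a) = es_pol E a) \<and>
     (\<forall>x\<in>Conf E. f ` x \<in> Conf F \<and> inj_on f x)"

definition es_aut :: "'a evstr \<Rightarrow> ('a \<Rightarrow> 'a) \<Rightarrow> bool" where
  "es_aut E g \<longleftrightarrow> bij_betw g (es_ev E) (es_ev E) \<and>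
     (\<forall>a\<in>es_ev E. \<forall>b\<in>es_ev E. es_le E (g a) (g b) = es_le E a b) \<and>
     (\<forall>a\<in>es_ev E. \<forall>b\<in>es_ev E. es_cf E (g a) (g b) = es_cf E a b) \<and>
     (\<forall>a\<in>es_ev E. es_pol E (g a) = es_pol E a)"

definition fixes_conf :: "('a \<Rightarrow> 'a) \<Rightarrow> 'a set \<Rightarrow> bool" where
  "fixes_conf g x \<longleftrightarrow> (\<forall>a\<in>x. g a = a)"

definition neg_aut :: "'a evstr \<Rightarrow> ('a \<Rightarrow> 'a) \<Rightarrow> bool" where
  "neg_aut E g \<longleftrightarrow> es_aut E g \<and>
     (\<forall>x\<in>Conf E. \<forall>y\<in>Conf E. fixes_conf g x \<and> pos_sub E x y \<longrightarrow> fixes_conf g y)"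

definition pos_aut :: "'a evstr \<Rightarrow> ('a \<Rightarrow> 'a) \<Rightarrow> bool" where
  "pos_aut E g \<longleftrightarrow> es_aut E g \<and>
     (\<forall>x\<in>Conf E. \<forall>y\<in>Conf E. fixes_conf g x \<and> neg_sub E x y \<longrightarrow> fixes_conf g y)"

text \<open>A group action of G on E by automorphisms satisfying property Q
  (a homomorphism into the automorphism group; automorphisms are compared on events).\<close>
definition group_action_by ::
  "('a evstr \<Rightarrow> ('a \<Rightarrow> 'a) \<Rightarrow> bool) \<Rightarrow> ('g, 'm) monoid_scheme \<Rightarrow> 'a evstr \<Rightarrow> ('g \<Rightarrow> 'a \<Rightarrow> 'a) \<Rightarrow> bool" where
  "group_action_by Q G E act \<longleftrightarrow> group G \<and>
     (\<forall>g\<in>carrier G. Q E (act g)) \<and>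
     (\<forall>a\<in>es_ev E. act \<one>\<^bsub>G\<^esub> a = a) \<and>
     (\<forall>g\<in>carrier G. \<forall>h\<in>carrier G. \<forall>a\<in>es_ev E. act (g \<otimes>\<^bsub>G\<^esub> h) a = act g (act h a))"

definition game ::
  "'a evstr \<Rightarrow> ('n, 'm1) monoid_scheme \<Rightarrow> ('n \<Rightarrow> 'a \<Rightarrow> 'a)
   \<Rightarrow> ('p, 'm2) monoid_scheme \<Rightarrow> ('p \<Rightarrow> 'a \<Rightarrow> 'a) \<Rightarrow> ('n \<Rightarrow> 'p \<Rightarrow> 'p \<times> 'n) \<Rightarrow> bool" where
  "game A N actN P actP lam \<longleftrightarrow>
     event_structure A \<and>
     group_action_by neg_aut N A actN \<and>
     group_action_by pos_aut P A actP \<and>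
     (\<forall>\<alpha>\<in>carrier N. \<forall>\<beta>\<in>carrier P. fst (lam \<alpha> \<beta>) \<in> carrier P \<and> snd (lam \<alpha> \<beta>) \<in> carrier N) \<and>
     \<comment> \<open>(i)\<close>
     (\<forall>\<beta>\<in>carrier P. lam \<one>\<^bsub>N\<^esub> \<beta> = (\<beta>, \<one>\<^bsub>N\<^esub>)) \<and>
     (\<forall>\<alpha>\<in>carrier N. lam \<alpha> \<one>\<^bsub>P\<^esub> = (\<one>\<^bsub>P\<^esub>, \<alpha>)) \<and>
     \<comment> \<open>(ii)\<close>
     (\<forall>\<alpha>\<in>carrier N. \<forall>\<alpha>'\<in>carrier N. \<forall>\<beta>\<in>carrier P.
        let (\<beta>1, \<alpha>1) = lam \<alpha>' \<beta>; (\<beta>2, \<alpha>2) = lam \<alpha> \<beta>1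
        in lam (\<alpha> \<otimes>\<^bsub>N\<^esub> \<alpha>') \<beta> = (\<beta>2, \<alpha>2 \<otimes>\<^bsub>N\<^esub> \<alpha>1)) \<and>
     \<comment> \<open>(iii)\<close>
     (\<forall>\<alpha>\<in>carrier N. \<forall>\<beta>\<in>carrier P. \<forall>\<beta>'\<in>carrier P.
        let (\<beta>1, \<alpha>1) = lam \<alpha> \<beta>; (\<beta>2, \<alpha>2) = lam \<alpha>1 \<beta>'
        in lam \<alpha> (\<beta> \<otimes>\<^bsub>P\<^esub> \<beta>') = (\<beta>1 \<otimes>\<^bsub>P\<^esub> \<beta>2, \<alpha>2)) \<and>
     \<comment> \<open>(iv)\<close>
     (\<forall>\<alpha>\<in>carrier N. \<forall>\<beta>\<in>carrier P.
        let (\<beta>', \<alpha>') = lam \<alpha> \<beta>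
        in \<forall>a\<in>es_ev A. actN \<alpha> (actP \<beta> a) = actP \<beta>' (actN \<alpha>' a))"

definition strategy :: "'s evstr \<Rightarrow> 'a evstr \<Rightarrow> ('s \<Rightarrow> 'a) \<Rightarrow> bool" where
  "strategy S A p \<longleftrightarrow> event_structure S \<and> es_map S A p \<and>
     (\<forall>x\<in>Conf S. \<forall>z\<in>Conf A. neg_sub A (p ` x) z \<longrightarrow>
        (\<exists>!y. y \<in> Conf S \<and> x \<subseteq> y \<and> p ` y = z)) \<and>
     (\<forall>x\<in>Conf S. \<forall>z\<in>Conf A. pos_sub A z (p ` x) \<longrightarrow>
        (\<exists>y\<in>Conf S. y \<subseteq> x \<and> p ` y = z))"

text \<open>Weak map $\alpha\cdot\sigma \to \sigma$ (the event structure of $\alpha\cdot\sigma$ is that of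
  $\sigma$, with projection $\alpha \circ p$).\<close>
definition weak_map_act ::
  "'s evstr \<Rightarrow> ('s \<Rightarrow> 'a) \<Rightarrow> ('p, 'm) monoid_scheme \<Rightarrow> ('p \<Rightarrow> 'a \<Rightarrow> 'a)
   \<Rightarrow> ('a \<Rightarrow> 'a) \<Rightarrow> ('s \<Rightarrow> 's) \<Rightarrow> ('s set \<Rightarrow> 'p) \<Rightarrow> bool" where
  "weak_map_act S p P actP g f fb \<longleftrightarrow> es_map S S f \<and>
     (\<forall>x\<in>Conf S. fb x \<in> carrier P \<and> (\<forall>s\<in>x. actP (fb x) (p (f s)) = g (p s)))"

definition uniform_strategy ::
  "'a evstr \<Rightarrow> ('n, 'm1) monoid_scheme \<Rightarrow> ('n \<Rightarrow> 'a \<Rightarrow> 'a)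
   \<Rightarrow> ('p, 'm2) monoid_scheme \<Rightarrow> ('p \<Rightarrow> 'a \<Rightarrow> 'a) \<Rightarrow> ('n \<Rightarrow> 'p \<Rightarrow> 'p \<times> 'n)
   \<Rightarrow> 's evstr \<Rightarrow> ('s \<Rightarrow> 'a) \<Rightarrow> ('n \<Rightarrow> 's \<Rightarrow> 's) \<Rightarrow> ('n \<Rightarrow> 's set \<Rightarrow> 'p) \<Rightarrow> bool" where
  "uniform_strategy A N actN P actP lam S p \<phi> \<phi>b \<longleftrightarrow>
     strategy S A p \<and>
     (\<forall>\<alpha>\<in>carrier N. weak_map_act S p P actP (actN \<alpha>) (\<phi> \<alpha>) (\<phi>b \<alpha>)) \<and>
     (\<forall>x\<in>Conf S. \<phi> \<one>\<^bsub>N\<^esub> ` x = x \<and> \<phi>b \<one>\<^bsub>N\<^esub> x = \<one>\<^bsub>P\<^esub>) \<and>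
     (\<forall>\<alpha>\<in>carrier N. \<forall>\<alpha>'\<in>carrier N. \<forall>x\<in>Conf S.
        let y = \<phi> \<alpha> ` x; (\<gamma>, \<beta>) = lam \<alpha>' (\<phi>b \<alpha> x)
        in \<phi> (\<alpha>' \<otimes>\<^bsub>N\<^esub> \<alpha>) ` x = \<phi> \<beta> ` y \<and>
           \<phi>b (\<alpha>' \<otimes>\<^bsub>N\<^esub> \<alpha>) x = \<gamma> \<otimes>\<^bsub>P\<^esub> \<phi>b \<beta> y)"

text \<open>A bijection $\theta : x \cong y$ is represented by its graph, a set of pairs;
  its domain is $x$ and its range is $y$.\<close>
definition conf_bij :: "'a evstr \<Rightarrow> ('a \<times> 'a) set \<Rightarrow> bool" where
  "conf_bij E \<theta> \<longleftrightarrow> Domain \<theta> \<in> Conf E \<and> Range \<theta> \<in> Conf E \<and>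
     single_valued \<theta> \<and> single_valued (converse \<theta>) \<and>
     (\<forall>(a, b)\<in>\<theta>. es_pol E a = es_pol E b)"

definition restr :: "('a \<times> 'a) set \<Rightarrow> 'a set \<Rightarrow> ('a \<times> 'a) set" where
  "restr \<theta> x = \<theta> \<inter> (x \<times> UNIV)"

definition iso_family :: "'a evstr \<Rightarrow> ('a \<times> 'a) set set \<Rightarrow> bool" where
  "iso_family E S \<longleftrightarrow>
     (\<forall>\<theta>\<in>S. conf_bij E \<theta>) \<and>
     (\<forall>x\<in>Conf E. Id_on x \<in> S) \<and>
     (\<forall>\<theta>\<in>S. \<forall>\<theta>'\<in>S. Range \<theta> = Domain \<theta>' \<longrightarrow> \<theta> O \<theta>' \<in> S) \<and>
     (\<forall>\<theta>\<in>S. converse \<theta> \<in> S) \<and>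
     (\<forall>\<theta>\<in>S. \<forall>x'\<in>Conf E. x' \<subseteq> Domain \<theta> \<longrightarrow> restr \<theta> x' \<in> S) \<and>
     (\<forall>\<theta>\<in>S. \<forall>x'\<in>Conf E. Domain \<theta> \<subseteq> x' \<longrightarrow>
        (\<exists>\<theta>'\<in>S. Domain \<theta>' = x' \<and> restr \<theta>' (Domain \<theta>) = \<theta>))"

definition es_sym_map ::
  "'a evstr \<Rightarrow> ('a \<times> 'a) set set \<Rightarrow> 'b evstr \<Rightarrow> ('b \<times> 'b) set set \<Rightarrow> ('a \<Rightarrow> 'b) \<Rightarrow> bool" where
  "es_sym_map E SE F SF f \<longleftrightarrow> es_map E F f \<and>
     (\<forall>\<theta>\<in>SE. {(f a, f b) | a b. (a, b) \<in> \<theta>} \<in> SF)"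

definition S_group ::
  "('g, 'm) monoid_scheme \<Rightarrow> ('g \<Rightarrow> 'a \<Rightarrow> 'a) \<Rightarrow> 'a evstr \<Rightarrow> ('a \<times> 'a) set set" where
  "S_group G act A = {{(a, act g a) | a. a \<in> x} | x g. x \<in> Conf A \<and> g \<in> carrier G}"

definition S_phi ::
  "('n, 'm) monoid_scheme \<Rightarrow> ('n \<Rightarrow> 's \<Rightarrow> 's) \<Rightarrow> 's evstr \<Rightarrow> ('s \<times> 's) set set" where
  "S_phi N \<phi> S = {{(s, \<phi> \<alpha> s) | s. s \<in> x} | x \<alpha>. x \<in> Conf S \<and> \<alpha> \<in> carrier N}"

inductive_set comp_closure :: "('a \<times> 'a) set set \<Rightarrow> ('a \<times> 'a) set set"
  for T :: "('a \<times> 'a) set set" where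
  base: "\<theta> \<in> T \<Longrightarrow> \<theta> \<in> comp_closure T"
| comp: "\<theta> \<in> comp_closure T \<Longrightarrow> \<theta>' \<in> comp_closure T \<Longrightarrow> Range \<theta> = Domain \<theta>'
         \<Longrightarrow> \<theta> O \<theta>' \<in> comp_closure T"

end

theory Submission
  imports Defs
begin

locale unif =
  fixes A :: "'a evstr" and N :: "('n, 'm1) monoid_scheme" and P :: "('p, 'm2) monoid_scheme"
    and actN :: "'n \<Rightarrow> 'a \<Rightarrow> 'a" and actP :: "'p \<Rightarrow> 'a \<Rightarrow> 'a"
    and lam :: "'n \<Rightarrow> 'p \<Rightarrow> 'p \<times> 'n"
    and S :: "'s evstr" and p :: "'s \<Rightarrow> 'a"
    and \<phi> :: "'n \<Rightarrow> 's \<Rightarrow> 's" and \<phi>b :: "'n \<Rightarrow> 's set \<Rightarrow> 'p"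
  assumes gm: "game A N actN P actP lam"
    and us: "uniform_strategy A N actN P actP lam S p \<phi> \<phi>b"
begin


lemma gaN: "group_action_by neg_aut N A actN"
  using gm unfolding game_def by (elim conjE)
lemma gaP: "group_action_by pos_aut P A actP"
  using gm unfolding game_def by (elim conjE)
lemma grpN: "group N" using gaN unfolding group_action_by_def by blast
lemma grpP: "group P" using gaP unfolding group_action_by_def by blast
lemma actN_aut: "\<alpha> \<in> carrier N \<Longrightarrow> es_aut A (actN \<alpha>)"
proof -
  assume a: "\<alpha> \<in> carrier N"
  have "neg_aut A (actN \<alpha>)" using gaN a unfolding group_action_by_def by blast
  then show ?thesis unfolding neg_aut_def by blast
qed
lemma actP_aut: "\<beta> \<in> carrier P \<Longrightarrow> es_aut A (actP \<beta>)"
proof -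
  assume a: "\<beta> \<in> carrier P"
  have "pos_aut A (actP \<beta>)" using gaP a unfolding group_action_by_def by blast
  then show ?thesis unfolding pos_aut_def by blast
qed
lemma actN_one: "a \<in> es_ev A \<Longrightarrow> actN \<one>\<^bsub>N\<^esub> a = a"
  using gaN unfolding group_action_by_def by blast
lemma actP_one: "a \<in> es_ev A \<Longrightarrow> actP \<one>\<^bsub>P\<^esub> a = a"
  using gaP unfolding group_action_by_def by blast
lemma actN_mult: "g \<in> carrier N \<Longrightarrow> h \<in> carrier N \<Longrightarrow> a \<in> es_ev A \<Longrightarrow>
   actN (g \<otimes>\<^bsub>N\<^esub> h) a = actN g (actN h a)"
  using gaN unfolding group_action_by_def by blast
lemma actP_mult: "g \<in> carrier P \<Longrightarrow> h \<in> carrier P \<Longrightarrow> a \<in> es_ev A \<Longrightarrow>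
   actP (g \<otimes>\<^bsub>P\<^esub> h) a = actP g (actP h a)"
  using gaP unfolding group_action_by_def by blast
lemma lam_closed: "\<alpha> \<in> carrier N \<Longrightarrow> \<beta> \<in> carrier P \<Longrightarrow> lam \<alpha> \<beta> = (b, a) \<Longrightarrow>
   b \<in> carrier P \<and> a \<in> carrier N"
  using gm unfolding game_def by (metis fst_conv snd_conv)
lemma lam_one: "\<alpha> \<in> carrier N \<Longrightarrow> lam \<alpha> \<one>\<^bsub>P\<^esub> = (\<one>\<^bsub>P\<^esub>, \<alpha>)"
  using gm unfolding game_def by blast
lemma lam_iii: "\<alpha> \<in> carrier N \<Longrightarrow> \<beta> \<in> carrier P \<Longrightarrow> \<beta>' \<in> carrier P \<Longrightarrow>
   lam \<alpha> \<beta> = (\<beta>1, \<alpha>1) \<Longrightarrow> lam \<alpha>1 \<beta>' = (\<beta>2, \<alpha>2) \<Longrightarrow>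
   lam \<alpha> (\<beta> \<otimes>\<^bsub>P\<^esub> \<beta>') = (\<beta>1 \<otimes>\<^bsub>P\<^esub> \<beta>2, \<alpha>2)"
proof -
  assume a: "\<alpha> \<in> carrier N" "\<beta> \<in> carrier P" "\<beta>' \<in> carrier P"
    "lam \<alpha> \<beta> = (\<beta>1, \<alpha>1)" "lam \<alpha>1 \<beta>' = (\<beta>2, \<alpha>2)"
  have "\<forall>\<alpha>\<in>carrier N. \<forall>\<beta>\<in>carrier P. \<forall>\<beta>'\<in>carrier P.
        let (\<beta>1, \<alpha>1) = lam \<alpha> \<beta>; (\<beta>2, \<alpha>2) = lam \<alpha>1 \<beta>'
        in lam \<alpha> (\<beta> \<otimes>\<^bsub>P\<^esub> \<beta>') = (\<beta>1 \<otimes>\<^bsub>P\<^esub> \<beta>2, \<alpha>2)"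
    using gm unfolding game_def by blast
  then have "let (\<beta>1, \<alpha>1) = lam \<alpha> \<beta>; (\<beta>2, \<alpha>2) = lam \<alpha>1 \<beta>'
        in lam \<alpha> (\<beta> \<otimes>\<^bsub>P\<^esub> \<beta>') = (\<beta>1 \<otimes>\<^bsub>P\<^esub> \<beta>2, \<alpha>2)" using a by blast
  then show ?thesis using a by simp
qed
lemma lam_iv: "\<alpha> \<in> carrier N \<Longrightarrow> \<beta> \<in> carrier P \<Longrightarrow> lam \<alpha> \<beta> = (\<beta>', \<alpha>') \<Longrightarrow>
   a \<in> es_ev A \<Longrightarrow> actN \<alpha> (actP \<beta> a) = actP \<beta>' (actN \<alpha>' a)"
proof -
  assume a: "\<alpha> \<in> carrier N" "\<beta> \<in> carrier P" "lam \<alpha> \<beta> = (\<beta>', \<alpha>')" "a \<in> es_ev A"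
  have "\<forall>\<alpha>\<in>carrier N. \<forall>\<beta>\<in>carrier P.
        let (\<beta>', \<alpha>') = lam \<alpha> \<beta>
        in \<forall>a\<in>es_ev A. actN \<alpha> (actP \<beta> a) = actP \<beta>' (actN \<alpha>' a)"
    using gm unfolding game_def by blast
  then have "let (\<beta>', \<alpha>') = lam \<alpha> \<beta>
        in \<forall>a\<in>es_ev A. actN \<alpha> (actP \<beta> a) = actP \<beta>' (actN \<alpha>' a)" using a by blast
  then show ?thesis using a by simp
qed

lemmas U = us[unfolded uniform_strategy_def]
lemmas U1 = U[THEN conjunct1]
lemmas U2 = U[THEN conjunct2, THEN conjunct1]
lemmas U3 = U[THEN conjunct2, THEN conjunct2, THEN conjunct1]
lemmas U4 = U[THEN conjunct2, THEN conjunct2, THEN conjunct2]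
lemma strat: "strategy S A p" by (rule U1)
lemma pmap: "es_map S A p" using strat unfolding strategy_def by blast
lemma p_conf: "x \<in> Conf S \<Longrightarrow> p ` x \<in> Conf A"
  using pmap unfolding es_map_def by blast
lemma p_inj: "x \<in> Conf S \<Longrightarrow> inj_on p x"
  using pmap unfolding es_map_def by blast
lemma conf_sub: "x \<in> Conf E \<Longrightarrow> x \<subseteq> es_ev E" unfolding Conf_def by blast
lemma p_ev: "x \<in> Conf S \<Longrightarrow> s \<in> x \<Longrightarrow> p s \<in> es_ev A"
  using p_conf conf_sub by blast

lemma wm: "\<alpha> \<in> carrier N \<Longrightarrow> weak_map_act S p P actP (actN \<alpha>) (\<phi> \<alpha>) (\<phi>b \<alpha>)"
  using U2 by (rule bspec)
lemma phi_map: "\<alpha> \<in> carrier N \<Longrightarrow> es_map S S (\<phi> \<alpha>)"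
  using wm unfolding weak_map_act_def by simp
lemma phi_conf: "\<alpha> \<in> carrier N \<Longrightarrow> x \<in> Conf S \<Longrightarrow> \<phi> \<alpha> ` x \<in> Conf S"
  using phi_map unfolding es_map_def by simp
lemma phi_inj: "\<alpha> \<in> carrier N \<Longrightarrow> x \<in> Conf S \<Longrightarrow> inj_on (\<phi> \<alpha>) x"
  using phi_map unfolding es_map_def by simp
lemma phi_pol: "\<alpha> \<in> carrier N \<Longrightarrow> s \<in> es_ev S \<Longrightarrow> es_pol S (\<phi> \<alpha> s) = es_pol S s"
  using phi_map unfolding es_map_def by simp
lemma phib_car: "\<alpha> \<in> carrier N \<Longrightarrow> x \<in> Conf S \<Longrightarrow> \<phi>b \<alpha> x \<in> carrier P"
  using wm unfolding weak_map_act_def by simp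
lemma wm_eq: "\<alpha> \<in> carrier N \<Longrightarrow> x \<in> Conf S \<Longrightarrow> s \<in> x \<Longrightarrow>
    actP (\<phi>b \<alpha> x) (p (\<phi> \<alpha> s)) = actN \<alpha> (p s)"
  using wm unfolding weak_map_act_def by simp
lemma phi_one_img: "x \<in> Conf S \<Longrightarrow> \<phi> \<one>\<^bsub>N\<^esub> ` x = x"
  using U3 by (drule_tac bspec) (assumption, erule conjunct1)
lemma phib_one: "x \<in> Conf S \<Longrightarrow> \<phi>b \<one>\<^bsub>N\<^esub> x = \<one>\<^bsub>P\<^esub>"
  using U3 by (drule_tac bspec) (assumption, erule conjunct2)
lemma unif_law: "\<alpha> \<in> carrier N \<Longrightarrow> \<alpha>' \<in> carrier N \<Longrightarrow> x \<in> Conf S \<Longrightarrow>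
   lam \<alpha>' (\<phi>b \<alpha> x) = (\<gamma>, \<beta>) \<Longrightarrow>
   \<phi> (\<alpha>' \<otimes>\<^bsub>N\<^esub> \<alpha>) ` x = \<phi> \<beta> ` (\<phi> \<alpha> ` x) \<and>
   \<phi>b (\<alpha>' \<otimes>\<^bsub>N\<^esub> \<alpha>) x = \<gamma> \<otimes>\<^bsub>P\<^esub> \<phi>b \<beta> (\<phi> \<alpha> ` x)"
proof -
  assume a: "\<alpha> \<in> carrier N" "\<alpha>' \<in> carrier N" "x \<in> Conf S" "lam \<alpha>' (\<phi>b \<alpha> x) = (\<gamma>, \<beta>)"
  have "\<forall>\<alpha>\<in>carrier N. \<forall>\<alpha>'\<in>carrier N. \<forall>x\<in>Conf S.
        let y = \<phi> \<alpha> ` x; (\<gamma>, \<beta>) = lam \<alpha>' (\<phi>b \<alpha> x)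
        in \<phi> (\<alpha>' \<otimes>\<^bsub>N\<^esub> \<alpha>) ` x = \<phi> \<beta> ` y \<and>
           \<phi>b (\<alpha>' \<otimes>\<^bsub>N\<^esub> \<alpha>) x = \<gamma> \<otimes>\<^bsub>P\<^esub> \<phi>b \<beta> y"
    by (rule U4)
  then have "let y = \<phi> \<alpha> ` x; (\<gamma>, \<beta>) = lam \<alpha>' (\<phi>b \<alpha> x)
        in \<phi> (\<alpha>' \<otimes>\<^bsub>N\<^esub> \<alpha>) ` x = \<phi> \<beta> ` y \<and>
           \<phi>b (\<alpha>' \<otimes>\<^bsub>N\<^esub> \<alpha>) x = \<gamma> \<otimes>\<^bsub>P\<^esub> \<phi>b \<beta> y" using a by blast
  then show ?thesis using a by simp
qed

lemma actP_inj: "\<beta> \<in> carrier P \<Longrightarrow> a \<in> es_ev A \<Longrightarrow> b \<in> es_ev A \<Longrightarrow>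
   actP \<beta> a = actP \<beta> b \<Longrightarrow> a = b"
  using actP_aut unfolding es_aut_def bij_betw_def inj_on_def by blast

lemma pinj_eq: "z \<in> Conf S \<Longrightarrow> s1 \<in> z \<Longrightarrow> s2 \<in> z \<Longrightarrow> p s1 = p s2 \<Longrightarrow> s1 = s2"
  using p_inj unfolding inj_on_def by blast

lemma phi_one: "x \<in> Conf S \<Longrightarrow> s \<in> x \<Longrightarrow> \<phi> \<one>\<^bsub>N\<^esub> s = s"
proof -
  assume x: "x \<in> Conf S" and s: "s \<in> x"
  have one: "\<one>\<^bsub>N\<^esub> \<in> carrier N" using grpN by (simp add: group.is_monoid monoid.one_closed)
  have m: "\<phi> \<one>\<^bsub>N\<^esub> s \<in> x" using phi_one_img[OF x] s by blast
  have "actP (\<phi>b \<one>\<^bsub>N\<^esub> x) (p (\<phi> \<one>\<^bsub>N\<^esub> s)) = actN \<one>\<^bsub>N\<^esub> (p s)"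
    using wm_eq[OF one x s] .
  then have "p (\<phi> \<one>\<^bsub>N\<^esub> s) = p s"
    using phib_one[OF x] actP_one actN_one p_ev[OF x s] p_ev[OF x m] by simp
  then show ?thesis using pinj_eq[OF x m s] by blast
qed

lemma KEY:
  assumes a: "\<alpha> \<in> carrier N" and a1: "\<alpha>1 \<in> carrier N" and x: "x \<in> Conf S"
    and l: "lam \<alpha>1 (\<phi>b \<alpha> x) = (\<gamma>, \<beta>)" and s: "s \<in> x"
  shows "\<phi> (\<alpha>1 \<otimes>\<^bsub>N\<^esub> \<alpha>) s = \<phi> \<beta> (\<phi> \<alpha> s)"
proof -
  define \<pi> where "\<pi> = \<phi>b \<alpha> x"
  define y where "y = \<phi> \<alpha> ` x"
  have pi: "\<pi> \<in> carrier P" using phib_car[OF a x] \<pi>_def by simp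
  have gb: "\<gamma> \<in> carrier P" "\<beta> \<in> carrier N" using lam_closed[OF a1 pi] l \<pi>_def by auto
  have y: "y \<in> Conf S" using phi_conf[OF a x] y_def by simp
  have aa: "\<alpha>1 \<otimes>\<^bsub>N\<^esub> \<alpha> \<in> carrier N" using grpN a a1 by (simp add: group.is_monoid monoid.m_closed)
  have U: "\<phi> (\<alpha>1 \<otimes>\<^bsub>N\<^esub> \<alpha>) ` x = \<phi> \<beta> ` y"
    "\<phi>b (\<alpha>1 \<otimes>\<^bsub>N\<^esub> \<alpha>) x = \<gamma> \<otimes>\<^bsub>P\<^esub> \<phi>b \<beta> y"
    using unif_law[OF a a1 x l] y_def by auto
  define z where "z = \<phi> \<beta> ` y"
  have z: "z \<in> Conf S" using phi_conf[OF gb(2) y] z_def by simp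
  have sy: "\<phi> \<alpha> s \<in> y" using s y_def by blast
  have m1: "\<phi> (\<alpha>1 \<otimes>\<^bsub>N\<^esub> \<alpha>) s \<in> z" using U(1) z_def s by blast
  have m2: "\<phi> \<beta> (\<phi> \<alpha> s) \<in> z" using z_def sy by blast
  have pb: "\<phi>b \<beta> y \<in> carrier P" using phib_car[OF gb(2) y] .
  have g: "\<gamma> \<otimes>\<^bsub>P\<^esub> \<phi>b \<beta> y \<in> carrier P" using grpP gb(1) pb
    by (simp add: group.is_monoid monoid.m_closed)
  have e1: "actP (\<gamma> \<otimes>\<^bsub>P\<^esub> \<phi>b \<beta> y) (p (\<phi> (\<alpha>1 \<otimes>\<^bsub>N\<^esub> \<alpha>) s)) = actN (\<alpha>1 \<otimes>\<^bsub>N\<^esub> \<alpha>) (p s)"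
    using wm_eq[OF aa x s] U(2) by simp
  also have "\<dots> = actN \<alpha>1 (actN \<alpha> (p s))" using actN_mult[OF a1 a p_ev[OF x s]] .
  also have "\<dots> = actN \<alpha>1 (actP \<pi> (p (\<phi> \<alpha> s)))" using wm_eq[OF a x s] \<pi>_def by simp
  also have "\<dots> = actP \<gamma> (actN \<beta> (p (\<phi> \<alpha> s)))"
    using lam_iv[OF a1 pi] l \<pi>_def p_ev[OF y sy] by simp
  also have "\<dots> = actP \<gamma> (actP (\<phi>b \<beta> y) (p (\<phi> \<beta> (\<phi> \<alpha> s))))"
    using wm_eq[OF gb(2) y sy] by simp
  also have "\<dots> = actP (\<gamma> \<otimes>\<^bsub>P\<^esub> \<phi>b \<beta> y) (p (\<phi> \<beta> (\<phi> \<alpha> s)))"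
    using actP_mult[OF gb(1) pb p_ev[OF z m2]] by simp
  finally have "p (\<phi> (\<alpha>1 \<otimes>\<^bsub>N\<^esub> \<alpha>) s) = p (\<phi> \<beta> (\<phi> \<alpha> s))"
    using actP_inj[OF g p_ev[OF z m1] p_ev[OF z m2]] by blast
  then show ?thesis using pinj_eq[OF z m1 m2] by blast
qed

lemma lam_inv: "\<alpha> \<in> carrier N \<Longrightarrow> \<pi> \<in> carrier P \<Longrightarrow>
   snd (lam (snd (lam \<alpha> \<pi>)) (inv\<^bsub>P\<^esub> \<pi>)) = \<alpha>"
proof -
  assume a: "\<alpha> \<in> carrier N" "\<pi> \<in> carrier P"
  obtain b1 a1 where l1: "lam \<alpha> \<pi> = (b1, a1)" by (cases "lam \<alpha> \<pi>") auto
  have ip: "inv\<^bsub>P\<^esub> \<pi> \<in> carrier P" using grpP a(2) by (simp add: group.inv_closed)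
  have a1: "a1 \<in> carrier N" using lam_closed[OF a l1] by blast
  obtain b2 a2 where l2: "lam a1 (inv\<^bsub>P\<^esub> \<pi>) = (b2, a2)" by (cases "lam a1 (inv\<^bsub>P\<^esub> \<pi>)") auto
  have "lam \<alpha> (\<pi> \<otimes>\<^bsub>P\<^esub> inv\<^bsub>P\<^esub> \<pi>) = (b1 \<otimes>\<^bsub>P\<^esub> b2, a2)" using lam_iii[OF a ip l1 l2] .
  moreover have "\<pi> \<otimes>\<^bsub>P\<^esub> inv\<^bsub>P\<^esub> \<pi> = \<one>\<^bsub>P\<^esub>" using grpP a(2) by (simp add: group.r_inv)
  ultimately have "a2 = \<alpha>" using lam_one[OF a(1)] by simp
  then show ?thesis using l1 l2 by simp
qed

lemma lam_inv2: "\<alpha> \<in> carrier N \<Longrightarrow> \<pi> \<in> carrier P \<Longrightarrow>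
   snd (lam (snd (lam \<alpha> (inv\<^bsub>P\<^esub> \<pi>))) \<pi>) = \<alpha>"
  using lam_inv[of \<alpha> "inv\<^bsub>P\<^esub> \<pi>"] grpP by (simp add: group.inv_closed group.inv_inv)

definition th :: "'s set \<Rightarrow> 'n \<Rightarrow> ('s \<times> 's) set" where
  "th x \<alpha> = {(s, \<phi> \<alpha> s) | s. s \<in> x}"

lemma S_phi_eq: "S_phi N \<phi> S = {th x \<alpha> | x \<alpha>. x \<in> Conf S \<and> \<alpha> \<in> carrier N}"
  unfolding S_phi_def th_def by blast

lemma th_dom: "Domain (th x \<alpha>) = x" unfolding th_def by blast
lemma th_ran: "Range (th x \<alpha>) = \<phi> \<alpha> ` x" unfolding th_def by blast

lemma comp_case:
  assumes a: "\<alpha> \<in> carrier N" and a2: "\<alpha>2 \<in> carrier N" and x: "x \<in> Conf S"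
    and x2: "x2 = \<phi> \<alpha> ` x"
  shows "\<exists>\<alpha>''\<in>carrier N. th x \<alpha> O th x2 \<alpha>2 = th x \<alpha>''"
proof -
  define \<pi> where "\<pi> = \<phi>b \<alpha> x"
  have pi: "\<pi> \<in> carrier P" using phib_car[OF a x] \<pi>_def by simp
  have ip: "inv\<^bsub>P\<^esub> \<pi> \<in> carrier P" using grpP pi by (simp add: group.inv_closed)
  obtain b1 a1 where l1: "lam \<alpha>2 (inv\<^bsub>P\<^esub> \<pi>) = (b1, a1)" by (cases "lam \<alpha>2 (inv\<^bsub>P\<^esub> \<pi>)") auto
  have a1: "a1 \<in> carrier N" using lam_closed[OF a2 ip l1] by blast
  obtain g b where l2: "lam a1 \<pi> = (g, b)" by (cases "lam a1 \<pi>") auto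
  have "b = \<alpha>2" using lam_inv2[OF a2 pi] l1 l2 by simp
  then have K: "\<And>s. s \<in> x \<Longrightarrow> \<phi> (a1 \<otimes>\<^bsub>N\<^esub> \<alpha>) s = \<phi> \<alpha>2 (\<phi> \<alpha> s)"
    using KEY[OF a a1 x] l2 \<pi>_def by simp
  have aa: "a1 \<otimes>\<^bsub>N\<^esub> \<alpha> \<in> carrier N" using grpN a a1 by (simp add: group.is_monoid monoid.m_closed)
  have "th x \<alpha> O th x2 \<alpha>2 = th x (a1 \<otimes>\<^bsub>N\<^esub> \<alpha>)"
    unfolding th_def x2 using K by auto
  then show ?thesis using aa by blast
qed

lemma conv_case:
  assumes a: "\<alpha> \<in> carrier N" and x: "x \<in> Conf S"
  shows "\<exists>\<alpha>''\<in>carrier N. converse (th x \<alpha>) = th (\<phi> \<alpha> ` x) \<alpha>''"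
proof -
  define \<pi> where "\<pi> = \<phi>b \<alpha> x"
  have pi: "\<pi> \<in> carrier P" using phib_car[OF a x] \<pi>_def by simp
  have ia: "inv\<^bsub>N\<^esub> \<alpha> \<in> carrier N" using grpN a by (simp add: group.inv_closed)
  obtain g b where l: "lam (inv\<^bsub>N\<^esub> \<alpha>) \<pi> = (g, b)" by (cases "lam (inv\<^bsub>N\<^esub> \<alpha>) \<pi>") auto
  have b: "b \<in> carrier N" using lam_closed[OF ia pi l] by blast
  have "inv\<^bsub>N\<^esub> \<alpha> \<otimes>\<^bsub>N\<^esub> \<alpha> = \<one>\<^bsub>N\<^esub>" using grpN a by (simp add: group.l_inv)
  then have K: "\<And>s. s \<in> x \<Longrightarrow> s = \<phi> b (\<phi> \<alpha> s)"
    using KEY[OF a ia x] l \<pi>_def phi_one[OF x] by metis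
  have "converse (th x \<alpha>) = th (\<phi> \<alpha> ` x) b"
    unfolding th_def using K by auto
  then show ?thesis using b by blast
qed

lemma th_conf_bij: "\<alpha> \<in> carrier N \<Longrightarrow> x \<in> Conf S \<Longrightarrow> conf_bij S (th x \<alpha>)"
  unfolding conf_bij_def
proof (intro conjI)
  assume a: "\<alpha> \<in> carrier N" and x: "x \<in> Conf S"
  show "Domain (th x \<alpha>) \<in> Conf S" using th_dom x by simp
  show "Range (th x \<alpha>) \<in> Conf S" using th_ran phi_conf[OF a x] by simp
  show "single_valued (th x \<alpha>)" unfolding th_def single_valued_def by blast
  show "single_valued (converse (th x \<alpha>))"
    using phi_inj[OF a x] unfolding th_def single_valued_def inj_on_def by blast
  show "\<forall>(a, b)\<in>th x \<alpha>. es_pol S a = es_pol S b"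
    using phi_pol[OF a] conf_sub[OF x] unfolding th_def by auto
qed

lemma restr_th: "x' \<subseteq> x \<Longrightarrow> restr (th x \<alpha>) x' = th x' \<alpha>"
  unfolding restr_def th_def by blast

lemma iso: "iso_family S (S_phi N \<phi> S)"
  unfolding iso_family_def S_phi_eq
proof (intro conjI ballI impI)
  fix \<theta> assume "\<theta> \<in> {th x \<alpha> |x \<alpha>. x \<in> Conf S \<and> \<alpha> \<in> carrier N}"
  then show "conf_bij S \<theta>" using th_conf_bij by blast
next
  fix x assume x: "x \<in> Conf S"
  have one: "\<one>\<^bsub>N\<^esub> \<in> carrier N" using grpN by (simp add: group.is_monoid monoid.one_closed)
  have "Id_on x = th x \<one>\<^bsub>N\<^esub>" unfolding th_def Id_on_def using phi_one[OF x] by auto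
  then show "Id_on x \<in> {th x \<alpha> |x \<alpha>. x \<in> Conf S \<and> \<alpha> \<in> carrier N}" using x one by blast
next
  fix \<theta> \<theta>' assume t: "\<theta> \<in> {th x \<alpha> |x \<alpha>. x \<in> Conf S \<and> \<alpha> \<in> carrier N}"
    and t': "\<theta>' \<in> {th x \<alpha> |x \<alpha>. x \<in> Conf S \<and> \<alpha> \<in> carrier N}"
    and r: "Range \<theta> = Domain \<theta>'"
  from t obtain x \<alpha> where tt: "\<theta> = th x \<alpha>" "x \<in> Conf S" "\<alpha> \<in> carrier N" by blast
  from t' obtain x2 \<alpha>2 where tt': "\<theta>' = th x2 \<alpha>2" "x2 \<in> Conf S" "\<alpha>2 \<in> carrier N" by blast
  have "x2 = \<phi> \<alpha> ` x" using r tt tt' th_dom th_ran by simp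
  then show "\<theta> O \<theta>' \<in> {th x \<alpha> |x \<alpha>. x \<in> Conf S \<and> \<alpha> \<in> carrier N}"
    using comp_case[OF tt(3) tt'(3) tt(2)] tt tt' by blast
next
  fix \<theta> assume t: "\<theta> \<in> {th x \<alpha> |x \<alpha>. x \<in> Conf S \<and> \<alpha> \<in> carrier N}"
  from t obtain x \<alpha> where tt: "\<theta> = th x \<alpha>" "x \<in> Conf S" "\<alpha> \<in> carrier N" by blast
  show "converse \<theta> \<in> {th x \<alpha> |x \<alpha>. x \<in> Conf S \<and> \<alpha> \<in> carrier N}"
    using conv_case[OF tt(3) tt(2)] phi_conf[OF tt(3) tt(2)] tt(1) by blast
next
  fix \<theta> x' assume t: "\<theta> \<in> {th x \<alpha> |x \<alpha>. x \<in> Conf S \<and> \<alpha> \<in> carrier N}"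
    and x': "x' \<in> Conf S" and sub: "x' \<subseteq> Domain \<theta>"
  from t obtain x \<alpha> where tt: "\<theta> = th x \<alpha>" "x \<in> Conf S" "\<alpha> \<in> carrier N" by blast
  show "restr \<theta> x' \<in> {th x \<alpha> |x \<alpha>. x \<in> Conf S \<and> \<alpha> \<in> carrier N}"
    using restr_th[of x' x \<alpha>] sub tt th_dom x' by auto
next
  fix \<theta> x' assume t: "\<theta> \<in> {th x \<alpha> |x \<alpha>. x \<in> Conf S \<and> \<alpha> \<in> carrier N}"
    and x': "x' \<in> Conf S" and sub: "Domain \<theta> \<subseteq> x'"
  from t obtain x \<alpha> where tt: "\<theta> = th x \<alpha>" "x \<in> Conf S" "\<alpha> \<in> carrier N" by blast
  have "th x' \<alpha> \<in> {th x \<alpha> |x \<alpha>. x \<in> Conf S \<and> \<alpha> \<in> carrier N}" using x' tt by blast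
  moreover have "Domain (th x' \<alpha>) = x'" by (rule th_dom)
  moreover have "restr (th x' \<alpha>) (Domain \<theta>) = \<theta>"
    using restr_th[of x x' \<alpha>] sub tt th_dom by simp
  ultimately show "\<exists>\<theta>'\<in>{th x \<alpha> |x \<alpha>. x \<in> Conf S \<and> \<alpha> \<in> carrier N}.
            Domain \<theta>' = x' \<and> restr \<theta>' (Domain \<theta>) = \<theta>" by blast
qed

lemma aut_conf: "es_aut E g \<Longrightarrow> x \<in> Conf E \<Longrightarrow> g ` x \<in> Conf E"
  unfolding Conf_def
proof (clarify, intro conjI)
  assume g: "es_aut E g" and fin: "finite x" and sub: "x \<subseteq> es_ev E"
    and dc: "\<forall>a\<in>x. \<forall>b\<in>es_ev E. es_le E b a \<longrightarrow> b \<in> x"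
    and cf: "\<forall>a\<in>x. \<forall>b\<in>x. \<not> es_cf E a b"
  have bij: "bij_betw g (es_ev E) (es_ev E)" using g unfolding es_aut_def by blast
  show "finite (g ` x)" using fin by simp
  show "g ` x \<subseteq> es_ev E" using bij sub unfolding bij_betw_def by blast
  show "\<forall>a\<in>g ` x. \<forall>b\<in>es_ev E. es_le E b a \<longrightarrow> b \<in> g ` x"
  proof (intro ballI impI)
    fix a b assume a: "a \<in> g ` x" and b: "b \<in> es_ev E" and le: "es_le E b a"
    obtain a' where a': "a' \<in> x" "a = g a'" using a by blast
    obtain b' where b': "b' \<in> es_ev E" "b = g b'" using b bij unfolding bij_betw_def by blast
    have "es_le E b' a'" using g le a' b' sub unfolding es_aut_def by blast
    then show "b \<in> g ` x" using dc a' b' by blast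
  qed
  show "\<forall>a\<in>g ` x. \<forall>b\<in>g ` x. \<not> es_cf E a b"
    using g cf sub unfolding es_aut_def by (smt (verit, best) image_iff subsetD)
qed

definition grel :: "('a \<Rightarrow> 'a) \<Rightarrow> 'a set \<Rightarrow> ('a \<times> 'a) set" where
  "grel g X = {(a, g a) | a. a \<in> X}"

lemma sym_part:
  assumes a: "\<alpha> \<in> carrier N" and x: "x \<in> Conf S"
  shows "{(p u, p v) | u v. (u, v) \<in> th x \<alpha>}
     \<in> comp_closure (S_group N actN A \<union> S_group P actP A)"
proof -
  define \<pi> where "\<pi> = \<phi>b \<alpha> x"
  have pi: "\<pi> \<in> carrier P" using phib_car[OF a x] \<pi>_def by simp
  have ip: "inv\<^bsub>P\<^esub> \<pi> \<in> carrier P" using grpP pi by (simp add: group.inv_closed)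
  define X where "X = p ` x"
  have X: "X \<in> Conf A" using p_conf[OF x] X_def by simp
  define Y where "Y = actN \<alpha> ` X"
  have Y: "Y \<in> Conf A" using aut_conf[OF actN_aut[OF a] X] Y_def by simp
  have t1: "grel (actN \<alpha>) X \<in> comp_closure (S_group N actN A \<union> S_group P actP A)"
    by (rule comp_closure.base) (use a X in \<open>auto simp: S_group_def grel_def\<close>)
  have t2: "grel (actP (inv\<^bsub>P\<^esub> \<pi>)) Y \<in> comp_closure (S_group N actN A \<union> S_group P actP A)"
    by (rule comp_closure.base) (use ip Y in \<open>auto simp: S_group_def grel_def\<close>)
  have rd: "Range (grel (actN \<alpha>) X) = Domain (grel (actP (inv\<^bsub>P\<^esub> \<pi>)) Y)"
    unfolding grel_def Y_def by blast
  have pv: "\<And>s. s \<in> x \<Longrightarrow> p (\<phi> \<alpha> s) = actP (inv\<^bsub>P\<^esub> \<pi>) (actN \<alpha> (p s))"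
  proof -
    fix s assume s: "s \<in> x"
    have ev: "p (\<phi> \<alpha> s) \<in> es_ev A" using p_ev[OF phi_conf[OF a x]] s by blast
    have "actP (inv\<^bsub>P\<^esub> \<pi>) (actN \<alpha> (p s)) = actP (inv\<^bsub>P\<^esub> \<pi>) (actP \<pi> (p (\<phi> \<alpha> s)))"
      using wm_eq[OF a x s] \<pi>_def by simp
    also have "\<dots> = actP (inv\<^bsub>P\<^esub> \<pi> \<otimes>\<^bsub>P\<^esub> \<pi>) (p (\<phi> \<alpha> s))" using actP_mult[OF ip pi ev] by simp
    also have "\<dots> = p (\<phi> \<alpha> s)" using grpP pi actP_one[OF ev] by (simp add: group.l_inv)
    finally show "p (\<phi> \<alpha> s) = actP (inv\<^bsub>P\<^esub> \<pi>) (actN \<alpha> (p s))" by simp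
  qed
  have "{(p u, p v) | u v. (u, v) \<in> th x \<alpha>} = grel (actN \<alpha>) X O grel (actP (inv\<^bsub>P\<^esub> \<pi>)) Y"
    unfolding th_def grel_def X_def Y_def using pv by auto
  then show ?thesis using comp_closure.comp[OF t1 t2 rd] by simp
qed

lemma main: "iso_family S (S_phi N \<phi> S) \<and>
         es_sym_map S (S_phi N \<phi> S) A
           (comp_closure (S_group N actN A \<union> S_group P actP A)) p"
  unfolding es_sym_map_def
  using iso pmap sym_part unfolding S_phi_eq by blast

end

theorem mainTheorem7:
  fixes A :: "'a evstr" and N :: "('n, 'm1) monoid_scheme" and P :: "('p, 'm2) monoid_scheme"
    and actN :: "'n \<Rightarrow> 'a \<Rightarrow> 'a" and actP :: "'p \<Rightarrow> 'a \<Rightarrow> 'a"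
    and lam :: "'n \<Rightarrow> 'p \<Rightarrow> 'p \<times> 'n"
    and S :: "'s evstr" and p :: "'s \<Rightarrow> 'a"
    and \<phi> :: "'n \<Rightarrow> 's \<Rightarrow> 's" and \<phi>b :: "'n \<Rightarrow> 's set \<Rightarrow> 'p"
  assumes "game A N actN P actP lam"
    and "uniform_strategy A N actN P actP lam S p \<phi> \<phi>b"
  shows "iso_family S (S_phi N \<phi> S) \<and>
         es_sym_map S (S_phi N \<phi> S) A
           (comp_closure (S_group N actN A \<union> S_group P actP A)) p"
  using unif.main[OF unif.intro[OF assms]] .

end
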